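(* Consider the lattice Boltzmann scheme described in the context under acoustic scaling ($\lambda>0$ fixed as $\Delta x\to0$), with a prepared initialisation $w_i=\sum_{\mathfrak{e}\in\mathbb{Z}^d}w_{i,\mathfrak{e}}x^{\mathfrak{e}}$, $i\in\{1,\dots,q\}$, where each sequence $(w_{i,\mathfrak{e}})_{\mathfrak{e}}\subset\mathbb{R}$ has finite support. Set $$\omega^{(0)}_i=\sum_{\mathfrak{e}}w_{i,\mathfrak{e}},\qquad \omega^{(1)}_i=-\sum_{|\mathfrak{n}|=1}\Big(\sum_{\mathfrak{e}}w_{i,\mathfrak{e}}\mathfrak{e}^{\mathfrak{n}}\Big)\partial_x^{\mathfrak{n}},$$ so that $w_i$ applied to smooth functions expands as $\omega_i^{(0)}+\Delta x\,\omega_i^{(1)}+O(\Delta x^2)$. Then for every $n\in\mathbb{N}^*$ and $x\in\mathbb{R}^d$ the modified equation of the $n$-th starting scheme is \begin{align*} \phi(0,x)&+n\frac{\Delta x}{\lambda}\partial_t\phi(0,x)+O(\Delta x^2)=\omega^{(0)}_1\phi(0,x)\\ &-n\Delta x\Big(\mathcal{G}_{11}\omega^{(0)}_1+\sum_{r=2}^q\mathcal{G}_{1r}\omega^{(0)}_r+\frac1n\sum_{r=2}^q\mathcal{G}_{1r}(\epsilon_r\omega^{(0)}_1-\omega^{(0)}_r)\sum_{\ell=0}^{n-1}\pi_{n-\ell}(s_r)-\frac1n\omega^{(1)}_1\Big)\phi(0,x)+O(\Delta x^2), \end{align*} where $\pi_\ell(X)=1-(1-X)^\ell$.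
   Context: Fix $d\ge1$, $q\ge1$, velocities $c_1,\dots,c_q\in\mathbb{Z}^d$, invertible $M\in GL_q(\mathbb{R})$, $S=\mathrm{diag}(s_1,\dots,s_q)$ with $s_i\in(0,2]$ for $i\ge2$, $s_1\in\mathbb{R}$, $\epsilon\in\mathbb{R}^q$ with $\epsilon_1=1$, all independent of $\Delta x$; $K=I-S(I-\epsilon e_1^T)$. $\Delta t=\Delta x/\lambda$. Shifts $(x_\ell\phi)(x)=\phi(x-\Delta x e_\ell)$, multi-index notation $x^{\mathfrak{e}}=x_1^{\mathfrak{e}_1}\cdots x_d^{\mathfrak{e}_d}$, $\mathfrak{e}^{\mathfrak{n}}=\prod_\ell \mathfrak{e}_\ell^{\mathfrak{n}_\ell}$, $\partial_x^{\mathfrak{n}}=\prod_\ell\partial_{x_\ell}^{\mathfrak{n}_\ell}$. $T=M\mathrm{diag}(x^{c_1},\dots,x^{c_q})M^{-1}$, $E=TK$, time shift $(z\phi)(t)=\phi(t+\Delta t)$. $\mathcal{G}=M\mathrm{diag}(c_1\cdot\nabla,\dots,c_q\cdot\nabla)M^{-1}$. Initialisation $m(0,x)=w\,m_1^\circ(x)$ with $w$ a vector of Laurent polynomials in the shifts. The $n$-th starting scheme is $m_1(n\Delta t,x)=(E^nw)_1m_1^\circ(x)$; its modified equation is obtained by substituting a smooth $\phi$ for the unknowns in $(z^n\phi)(0,x)=((E^nw)_1\phi(0,\cdot))(x)$ and Taylor-expanding both sides in $\Delta x$. *)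

theory Defs
  imports "HOL-Analysis.Analysis" "HOL-Library.Landau_Symbols"
begin

fun Ck :: "nat \<Rightarrow> ('a::euclidean_space \<Rightarrow> real) \<Rightarrow> bool" where
  "Ck 0 f = continuous_on UNIV f"
| "Ck (Suc k) f = (f differentiable_on UNIV \<and>
      (\<forall>v. Ck k (\<lambda>y. frechet_derivative f (at y) v)))"

definition smooth_fun :: "('a::euclidean_space \<Rightarrow> real) \<Rightarrow> bool" where
  "smooth_fun f \<longleftrightarrow> (\<forall>k. Ck k f)"

definition dpart :: "(real^'d \<Rightarrow> real) \<Rightarrow> 'd \<Rightarrow> real^'d \<Rightarrow> real" where
  "dpart psi l y = frechet_derivative psi (at y) (axis l 1)"

definition dtime :: "(real \<times> (real^'d) \<Rightarrow> real) \<Rightarrow> real \<times> (real^'d) \<Rightarrow> real" where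
  "dtime phi p = frechet_derivative phi (at p) (1, 0)"

text \<open>Monomial x^e in the shifts: (x^e psi)(y) = psi(y - dx e).\<close>
definition shift :: "real \<Rightarrow> int^'d \<Rightarrow> (real^'d \<Rightarrow> real) \<Rightarrow> real^'d \<Rightarrow> real" where
  "shift dx e psi y = psi (y - dx *\<^sub>R (\<chi> l. of_int (e $ l)))"

text \<open>Laurent polynomial with finitely supported coefficients a, applied to psi.\<close>
definition laurent_app :: "real \<Rightarrow> (int^'d \<Rightarrow> real) \<Rightarrow> (real^'d \<Rightarrow> real) \<Rightarrow> real^'d \<Rightarrow> real" where
  "laurent_app dx a psi y = (\<Sum>e\<in>{e. a e \<noteq> 0}. a e * shift dx e psi y)"

text \<open>Relaxation matrix K = I - S (I - eps e_1^T).\<close>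
definition Kmat :: "(nat \<Rightarrow> real) \<Rightarrow> (nat \<Rightarrow> real) \<Rightarrow> nat \<Rightarrow> nat \<Rightarrow> real" where
  "Kmat s eps i j = (if i = j then 1 else 0)
      - s i * ((if i = j then 1 else 0) - eps i * (if j = 1 then 1 else 0))"

text \<open>T = M diag(x^{c_1},...,x^{c_q}) M^{-1}, acting on vectors of functions.\<close>
definition Top :: "nat \<Rightarrow> (nat \<Rightarrow> int^'d) \<Rightarrow> (nat \<Rightarrow> nat \<Rightarrow> real) \<Rightarrow> (nat \<Rightarrow> nat \<Rightarrow> real)
    \<Rightarrow> real \<Rightarrow> (nat \<Rightarrow> real^'d \<Rightarrow> real) \<Rightarrow> nat \<Rightarrow> real^'d \<Rightarrow> real" where
  "Top q c M Mi dx F i y =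
     (\<Sum>j\<in>{1..q}. \<Sum>k\<in>{1..q}. M i k * Mi k j * shift dx (c k) (F j) y)"

definition Kop :: "nat \<Rightarrow> (nat \<Rightarrow> real) \<Rightarrow> (nat \<Rightarrow> real)
    \<Rightarrow> (nat \<Rightarrow> real^'d \<Rightarrow> real) \<Rightarrow> nat \<Rightarrow> real^'d \<Rightarrow> real" where
  "Kop q s eps F i y = (\<Sum>j\<in>{1..q}. Kmat s eps i j * F j y)"

definition Eop :: "nat \<Rightarrow> (nat \<Rightarrow> int^'d) \<Rightarrow> (nat \<Rightarrow> nat \<Rightarrow> real) \<Rightarrow> (nat \<Rightarrow> nat \<Rightarrow> real)
    \<Rightarrow> (nat \<Rightarrow> real) \<Rightarrow> (nat \<Rightarrow> real) \<Rightarrow> real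
    \<Rightarrow> (nat \<Rightarrow> real^'d \<Rightarrow> real) \<Rightarrow> nat \<Rightarrow> real^'d \<Rightarrow> real" where
  "Eop q c M Mi s eps dx F = Top q c M Mi dx (Kop q s eps F)"

definition start_scheme :: "nat \<Rightarrow> (nat \<Rightarrow> int^'d) \<Rightarrow> (nat \<Rightarrow> nat \<Rightarrow> real) \<Rightarrow> (nat \<Rightarrow> nat \<Rightarrow> real)
    \<Rightarrow> (nat \<Rightarrow> real) \<Rightarrow> (nat \<Rightarrow> real) \<Rightarrow> (nat \<Rightarrow> int^'d \<Rightarrow> real) \<Rightarrow> nat \<Rightarrow> real
    \<Rightarrow> (real^'d \<Rightarrow> real) \<Rightarrow> real^'d \<Rightarrow> real" where
  "start_scheme q c M Mi s eps w n dx psi x =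
     ((Eop q c M Mi s eps dx ^^ n) (\<lambda>i. laurent_app dx (w i) psi)) 1 x"

definition omega0 :: "(nat \<Rightarrow> int^'d \<Rightarrow> real) \<Rightarrow> nat \<Rightarrow> real" where
  "omega0 w i = (\<Sum>e\<in>{e. w i e \<noteq> 0}. w i e)"

definition omega1 :: "(nat \<Rightarrow> int^'d \<Rightarrow> real) \<Rightarrow> nat \<Rightarrow> (real^'d \<Rightarrow> real) \<Rightarrow> real^'d \<Rightarrow> real" where
  "omega1 w i psi y = - (\<Sum>l\<in>UNIV. (\<Sum>e\<in>{e. w i e \<noteq> 0}. w i e * of_int (e $ l)) * dpart psi l y)"

text \<open>G = M diag(c_1 . grad, ..., c_q . grad) M^{-1}; entry (i,j) applied to psi.\<close>
definition Gop :: "nat \<Rightarrow> (nat \<Rightarrow> int^'d) \<Rightarrow> (nat \<Rightarrow> nat \<Rightarrow> real) \<Rightarrow> (nat \<Rightarrow> nat \<Rightarrow> real)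
    \<Rightarrow> nat \<Rightarrow> nat \<Rightarrow> (real^'d \<Rightarrow> real) \<Rightarrow> real^'d \<Rightarrow> real" where
  "Gop q c M Mi i j psi y =
     (\<Sum>k\<in>{1..q}. M i k * Mi k j * (\<Sum>l\<in>UNIV. of_int (c k $ l) * dpart psi l y))"

definition pi_poly :: "nat \<Rightarrow> real \<Rightarrow> real" where
  "pi_poly l X = 1 - (1 - X) ^ l"

end

theory Submission
  imports Defs
begin

lemma taylor2:
  fixes f :: "'a::euclidean_space \<Rightarrow> real"
  assumes d1: "\<forall>y. f differentiable (at y)"
      and d2: "\<forall>y. (\<lambda>z. frechet_derivative f (at z) v) differentiable (at y)"
  shows "(\<lambda>h. f (p + h *\<^sub>R v) - f p - h * frechet_derivative f (at p) v) \<in> O[at_right 0](\<lambda>h. h^2)"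
proof -
  define Df where "Df = (\<lambda>y. frechet_derivative f (at y))"
  define g' where "g' = (\<lambda>t. Df (p + t *\<^sub>R v) v)"
  have lin: "linear (Df y)" for y
    using d1 frechet_derivative_works has_derivative_linear Df_def by blast
  have gder: "((\<lambda>t. f (p + t *\<^sub>R v)) has_real_derivative g' t) (at t)" for t
  proof -
    have "(f has_derivative Df (p + t *\<^sub>R v)) (at (p + t *\<^sub>R v))" using d1 frechet_derivative_works Df_def by blast
    moreover have "((\<lambda>t. p + t *\<^sub>R v) has_derivative (\<lambda>t'. t' *\<^sub>R v)) (at t)" by (auto intro!: derivative_eq_intros)
    ultimately have "((\<lambda>t. f (p + t *\<^sub>R v)) has_derivative (\<lambda>t'. Df (p + t *\<^sub>R v) (t' *\<^sub>R v))) (at t)"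
      using has_derivative_compose by fastforce
    then have "((\<lambda>t. f (p + t *\<^sub>R v)) has_derivative (\<lambda>t'. Df (p + t *\<^sub>R v) v * t')) (at t)"
      by (simp add: linear_scale[OF lin] mult.commute)
    then show ?thesis by (simp add: has_field_derivative_def g'_def)
  qed
  obtain L where Lder: "(g' has_real_derivative L) (at 0)"
  proof -
    define Dv where "Dv = (\<lambda>z. Df z v)"
    have "(Dv has_derivative frechet_derivative Dv (at p)) (at (p + 0 *\<^sub>R v))"
      using d2 frechet_derivative_works Df_def Dv_def by auto
    moreover have "((\<lambda>t. p + t *\<^sub>R v) has_derivative (\<lambda>t'. t' *\<^sub>R v)) (at 0)" by (auto intro!: derivative_eq_intros)
    ultimately have "((\<lambda>t. Dv (p + t *\<^sub>R v)) has_derivative (\<lambda>t'. frechet_derivative Dv (at p) (t' *\<^sub>R v))) (at 0)"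
      using has_derivative_compose by fastforce
    moreover have "linear (frechet_derivative Dv (at p))"
      using d2 frechet_derivative_works has_derivative_linear Df_def Dv_def by blast
    ultimately have "((\<lambda>t. Dv (p + t *\<^sub>R v)) has_derivative (\<lambda>t'. frechet_derivative Dv (at p) v * t')) (at 0)"
      by (simp add: linear_scale mult.commute)
    then have "(g' has_real_derivative frechet_derivative Dv (at p) v) (at 0)"
      by (simp add: has_field_derivative_def g'_def Dv_def)
    then show ?thesis using that by blast
  qed
  have "((\<lambda>y. (g' y - g' 0) / (y - 0)) \<longlongrightarrow> L) (at 0)"
    using Lder has_field_derivative_iff by blast
  then have "eventually (\<lambda>y. dist ((g' y - g' 0) / (y - 0)) L < 1) (at 0)"
    using tendstoD zero_less_one by blast
  then obtain d where d: "d > 0" and dd: "\<And>y. y \<noteq> 0 \<Longrightarrow> dist y 0 < d \<Longrightarrow> dist ((g' y - g' 0) / (y - 0)) L < 1"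
    unfolding eventually_at by blast
  have bnd: "\<bar>g' y - g' 0\<bar> \<le> (\<bar>L\<bar> + 1) * y" if "0 < y" "y < d" for y
  proof -
    have "\<bar>(g' y - g' 0) / y - L\<bar> < 1" using dd[of y] that by (simp add: dist_real_def)
    then have "\<bar>(g' y - g' 0) / y\<bar> \<le> \<bar>L\<bar> + 1" by linarith
    then show ?thesis using that by (simp add: abs_div divide_le_eq)
  qed
  show ?thesis
  proof (rule bigoI[where c = "\<bar>L\<bar> + 1"])
    show "eventually (\<lambda>h. norm (f (p + h *\<^sub>R v) - f p - h * frechet_derivative f (at p) v) \<le> (\<bar>L\<bar> + 1) * norm (h^2)) (at_right 0)"
      unfolding eventually_at_right_field
    proof (intro exI[of _ d] conjI allI impI)
      fix h :: real assume h: "0 < h" "h < d"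
      have "\<exists>z. 0 < z \<and> z < h \<and> ((f (p + h *\<^sub>R v) - h * g' 0) - (f (p + 0 *\<^sub>R v) - 0 * g' 0) = (h - 0) * (g' z - g' 0))"
        by (rule MVT2) (use h in \<open>auto intro!: derivative_eq_intros gder\<close>)
      then obtain z where z: "0 < z" "z < h" and eq: "f (p + h *\<^sub>R v) - f p - h * g' 0 = h * (g' z - g' 0)"
        by (auto simp: algebra_simps)
      have "(\<bar>L\<bar>+1)*z \<le> (\<bar>L\<bar>+1)*h" using z by (intro mult_left_mono) auto
      then have "\<bar>g' z - g' 0\<bar> \<le> (\<bar>L\<bar> + 1) * h" using bnd[of z] z h by linarith
      then have "\<bar>h * (g' z - g' 0)\<bar> \<le> h * ((\<bar>L\<bar> + 1) * h)"
        using h by (simp add: abs_mult mult_left_mono)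
      then show "norm (f (p + h *\<^sub>R v) - f p - h * frechet_derivative f (at p) v) \<le> (\<bar>L\<bar> + 1) * norm (h^2)"
        using eq by (simp add: g'_def Df_def power2_eq_square algebra_simps)
    qed (use d in auto)
  qed
qed

definition C2 :: "('a::euclidean_space \<Rightarrow> real) \<Rightarrow> bool" where
  "C2 f \<longleftrightarrow> (\<forall>y. f differentiable (at y)) \<and> (\<forall>v y. (\<lambda>z. frechet_derivative f (at z) v) differentiable (at y))"

lemma C2_linear: "C2 f \<Longrightarrow> linear (frechet_derivative f (at y))"
  unfolding C2_def using frechet_derivative_works has_derivative_linear by blast

inductive srep :: "(real^'d \<Rightarrow> real) \<Rightarrow> (real \<Rightarrow> real^'d \<Rightarrow> real) \<Rightarrow> real \<Rightarrow> real^'d \<Rightarrow> bool"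
  for \<psi> where
  rzero: "srep \<psi> (\<lambda>dx y. 0) 0 0"
| ratom: "srep \<psi> (\<lambda>dx y. \<psi> (y - dx *\<^sub>R v)) 1 v"
| radd: "srep \<psi> F a b \<Longrightarrow> srep \<psi> G a' b' \<Longrightarrow> srep \<psi> (\<lambda>dx y. F dx y + G dx y) (a + a') (b + b')"
| rscale: "srep \<psi> F a b \<Longrightarrow> srep \<psi> (\<lambda>dx y. r * F dx y) (r * a) (r *\<^sub>R b)"

lemma srep_cong: "srep \<psi> F a b \<Longrightarrow> F = G \<Longrightarrow> a = a' \<Longrightarrow> b = b' \<Longrightarrow> srep \<psi> G a' b'"
  by simp

lemma srep_shift:
  assumes "srep \<psi> F a b"
  shows "srep \<psi> (\<lambda>dx y. F dx (y - dx *\<^sub>R u)) a (b + a *\<^sub>R u)"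
  using assms
proof induction
  case rzero
  then show ?case using srep.rzero by simp
next
  case (ratom v)
  show ?case
    by (rule srep_cong[OF srep.ratom[of \<psi> "v + u"]]) (auto simp: algebra_simps)
next
  case (radd F a b G a' b')
  show ?case
    by (rule srep_cong[OF srep.radd[OF radd.IH]]) (auto simp: algebra_simps)
next
  case (rscale F a b r)
  show ?case
    by (rule srep_cong[OF srep.rscale[OF rscale.IH, of r]]) (auto simp: algebra_simps)
qed

lemma srep_sum:
  assumes "finite S" "\<And>j. j \<in> S \<Longrightarrow> srep \<psi> (F j) (a j) (b j)"
  shows "srep \<psi> (\<lambda>dx y. \<Sum>j\<in>S. F j dx y) (\<Sum>j\<in>S. a j) (\<Sum>j\<in>S. b j)"
  using assms
proof (induction S rule: finite_induct)
  case empty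
  then show ?case using srep.rzero by simp
next
  case (insert j S)
  show ?case
    by (rule srep_cong[OF srep.radd[OF insert.prems[of j] insert.IH]]) (use insert in auto)
qed

lemma srep_expand:
  assumes "srep \<psi> F a b" "C2 \<psi>"
  shows "(\<lambda>dx. F dx x - (a * \<psi> x - dx * frechet_derivative \<psi> (at x) b)) \<in> O[at_right 0](\<lambda>dx. dx^2)"
  using assms(1)
proof induction
  case rzero
  then show ?case using linear_0[OF C2_linear[OF assms(2)]] by simp
next
  case (ratom v)
  have "(\<lambda>h. \<psi> (x + h *\<^sub>R (-v)) - \<psi> x - h * frechet_derivative \<psi> (at x) (-v)) \<in> O[at_right 0](\<lambda>h. h^2)"
    by (rule taylor2) (use assms(2) in \<open>auto simp: C2_def\<close>)
  then show ?case using linear_neg[OF C2_linear[OF assms(2)]] by (simp add: algebra_simps)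
next
  case (radd F a b G a' b')
  have "(\<lambda>dx. (F dx x - (a * \<psi> x - dx * frechet_derivative \<psi> (at x) b)) + (G dx x - (a' * \<psi> x - dx * frechet_derivative \<psi> (at x) b'))) \<in> O[at_right 0](\<lambda>dx. dx^2)"
    by (rule sum_in_bigo(1)[OF radd.IH])
  then show ?case using linear_add[OF C2_linear[OF assms(2)]] by (simp add: algebra_simps)
next
  case (rscale F a b r)
  have "(\<lambda>dx. r * (F dx x - (a * \<psi> x - dx * frechet_derivative \<psi> (at x) b))) \<in> O[at_right 0](\<lambda>dx. dx^2)"
    using rscale.IH by simp
  then show ?case using linear_scale[OF C2_linear[OF assms(2)]] by (simp add: algebra_simps)
qed

lemma linear_coords:
  fixes D :: "real^'d \<Rightarrow> real"
  assumes "linear D"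
  shows "D v = (\<Sum>l\<in>UNIV. v $ l * D (axis l 1))"
proof -
  have "D v = D (\<Sum>l\<in>UNIV. (v $ l) *\<^sub>R axis l 1)"
    using basis_expansion[of v] by (simp add: scalar_mult_eq_scaleR)
  also have "\<dots> = (\<Sum>l\<in>UNIV. v $ l * D (axis l 1))"
    using assms by (simp add: linear_sum linear_scale)
  finally show ?thesis .
qed

lemma C2_of_smooth: "smooth_fun f \<Longrightarrow> C2 f"
proof -
  assume "smooth_fun f"
  then have "Ck (Suc (Suc 0)) f" unfolding smooth_fun_def by blast
  then show "C2 f" by (auto simp: C2_def differentiable_on_def)
qed

lemma C2_slice:
  fixes phi :: "real \<times> (real^'d) \<Rightarrow> real"
  assumes "C2 phi"
  shows "C2 (\<lambda>y. phi (0, y))"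
    and "frechet_derivative (\<lambda>y. phi (0, y)) (at y) u = frechet_derivative phi (at (0, y)) (0, u)"
proof -
  have hd: "((\<lambda>y. phi (0, y)) has_derivative (\<lambda>u. frechet_derivative phi (at (0, y)) (0, u))) (at y)" for y
  proof -
    have "(phi has_derivative frechet_derivative phi (at (0, y))) (at (0, y))"
      using assms frechet_derivative_works unfolding C2_def by blast
    moreover have "((\<lambda>y. (0::real, y)) has_derivative (\<lambda>u. (0, u))) (at y)"
      by (auto intro!: derivative_eq_intros)
    ultimately show ?thesis using has_derivative_compose by fastforce
  qed
  then have fd: "frechet_derivative (\<lambda>y. phi (0, y)) (at y) = (\<lambda>u. frechet_derivative phi (at (0, y)) (0, u))" for y
    by (metis frechet_derivative_at)
  show "frechet_derivative (\<lambda>y. phi (0, y)) (at y) u = frechet_derivative phi (at (0, y)) (0, u)"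
    by (simp add: fd)
  show "C2 (\<lambda>y. phi (0, y))"
    unfolding C2_def
  proof (intro conjI allI)
    fix y show "(\<lambda>y. phi (0, y)) differentiable at y" using hd differentiable_def by blast
  next
    fix v y
    have "(\<lambda>p. frechet_derivative phi (at p) (0, v)) differentiable at (0, y)"
      using assms unfolding C2_def by blast
    moreover have "(\<lambda>y. (0::real, y)) differentiable at y"
      by (rule differentiableI, auto intro!: derivative_eq_intros)
    ultimately have "((\<lambda>p. frechet_derivative phi (at p) (0, v)) \<circ> (\<lambda>y. (0::real, y))) differentiable at y"
      using differentiable_chain_at by fastforce
    then show "(\<lambda>z. frechet_derivative (\<lambda>y. phi (0, y)) (at z) v) differentiable at y"
      by (simp add: fd o_def)
  qed
qed

definition cv :: "int^'d \<Rightarrow> real^'d" where "cv e = (\<chi> l. of_int (e $ l))"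

definition AKf :: "nat \<Rightarrow> (nat \<Rightarrow> real) \<Rightarrow> (nat \<Rightarrow> real) \<Rightarrow> (nat \<Rightarrow> real) \<Rightarrow> nat \<Rightarrow> real" where
  "AKf q s eps A j = (\<Sum>j'\<in>{1..q}. Kmat s eps j j' * A j')"
definition BKf :: "nat \<Rightarrow> (nat \<Rightarrow> real) \<Rightarrow> (nat \<Rightarrow> real) \<Rightarrow> (nat \<Rightarrow> real^'d) \<Rightarrow> nat \<Rightarrow> real^'d" where
  "BKf q s eps B j = (\<Sum>j'\<in>{1..q}. Kmat s eps j j' *\<^sub>R B j')"
definition TA :: "nat \<Rightarrow> (nat \<Rightarrow> nat \<Rightarrow> real) \<Rightarrow> (nat \<Rightarrow> nat \<Rightarrow> real) \<Rightarrow> (nat \<Rightarrow> real) \<Rightarrow> nat \<Rightarrow> real" where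
  "TA q M Mi A i = (\<Sum>j\<in>{1..q}. \<Sum>k\<in>{1..q}. M i k * Mi k j * A j)"
definition TB :: "nat \<Rightarrow> (nat \<Rightarrow> int^'d) \<Rightarrow> (nat \<Rightarrow> nat \<Rightarrow> real) \<Rightarrow> (nat \<Rightarrow> nat \<Rightarrow> real) \<Rightarrow> (nat \<Rightarrow> real) \<Rightarrow> (nat \<Rightarrow> real^'d) \<Rightarrow> nat \<Rightarrow> real^'d" where
  "TB q c M Mi A B i = (\<Sum>j\<in>{1..q}. \<Sum>k\<in>{1..q}. (M i k * Mi k j) *\<^sub>R (B j + A j *\<^sub>R cv (c k)))"

primrec ABv :: "nat \<Rightarrow> (nat \<Rightarrow> int^'d) \<Rightarrow> (nat \<Rightarrow> nat \<Rightarrow> real) \<Rightarrow> (nat \<Rightarrow> nat \<Rightarrow> real) \<Rightarrow> (nat \<Rightarrow> real) \<Rightarrow> (nat \<Rightarrow> real)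
   \<Rightarrow> (nat \<Rightarrow> real) \<Rightarrow> (nat \<Rightarrow> real^'d) \<Rightarrow> nat \<Rightarrow> (nat \<Rightarrow> real) \<times> (nat \<Rightarrow> real^'d)" where
  "ABv q c M Mi s eps A0 B0 0 = (A0, B0)"
| "ABv q c M Mi s eps A0 B0 (Suc k) =
     (TA q M Mi (AKf q s eps (fst (ABv q c M Mi s eps A0 B0 k))),
      TB q c M Mi (AKf q s eps (fst (ABv q c M Mi s eps A0 B0 k))) (BKf q s eps (snd (ABv q c M Mi s eps A0 B0 k))))"

lemma scheme_srep:
  fixes w :: "nat \<Rightarrow> int^'d \<Rightarrow> real" and \<psi> :: "real^'d \<Rightarrow> real"
  assumes w_fin: "\<forall>i\<in>{1..q}. finite {e. w i e \<noteq> 0}"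
  shows "\<forall>i\<in>{1..q}. srep \<psi> (\<lambda>dx y. ((Eop q c M Mi s eps dx ^^ k) (\<lambda>i. laurent_app dx (w i) \<psi>)) i y)
            (fst (ABv q c M Mi s eps (omega0 w) (\<lambda>i. \<Sum>e\<in>{e. w i e \<noteq> 0}. w i e *\<^sub>R cv e) k) i)
            (snd (ABv q c M Mi s eps (omega0 w) (\<lambda>i. \<Sum>e\<in>{e. w i e \<noteq> 0}. w i e *\<^sub>R cv e) k) i)"
proof (induction k)
  case 0
  show ?case
  proof
    fix i assume i: "i \<in> {1..q}"
    have "srep \<psi> (\<lambda>dx y. \<Sum>e\<in>{e. w i e \<noteq> 0}. w i e * \<psi> (y - dx *\<^sub>R cv e))
            (\<Sum>e\<in>{e. w i e \<noteq> 0}. w i e * 1) (\<Sum>e\<in>{e. w i e \<noteq> 0}. w i e *\<^sub>R cv e)"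
      by (rule srep_sum[OF w_fin[rule_format, OF i]]) (rule srep.rscale[OF srep.ratom])
    then show "srep \<psi> (\<lambda>dx y. ((Eop q c M Mi s eps dx ^^ 0) (\<lambda>i. laurent_app dx (w i) \<psi>)) i y)
            (fst (ABv q c M Mi s eps (omega0 w) (\<lambda>i. \<Sum>e\<in>{e. w i e \<noteq> 0}. w i e *\<^sub>R cv e) 0) i)
            (snd (ABv q c M Mi s eps (omega0 w) (\<lambda>i. \<Sum>e\<in>{e. w i e \<noteq> 0}. w i e *\<^sub>R cv e) 0) i)"
      by (rule srep_cong) (auto simp: laurent_app_def shift_def cv_def omega0_def)
  qed
next
  case (Suc k)
  define GG where "GG = (\<lambda>dx. (Eop q c M Mi s eps dx ^^ k) (\<lambda>i. laurent_app dx (w i) \<psi>))"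
  define AB where "AB = ABv q c M Mi s eps (omega0 w) (\<lambda>i. \<Sum>e\<in>{e. w i e \<noteq> 0}. w i e *\<^sub>R cv e) k"
  have IH: "\<And>j. j \<in> {1..q} \<Longrightarrow> srep \<psi> (\<lambda>dx y. GG dx j y) (fst AB j) (snd AB j)"
    using Suc.IH unfolding GG_def AB_def by blast
  have Kj: "srep \<psi> (\<lambda>dx y. Kop q s eps (GG dx) j y) (AKf q s eps (fst AB) j) (BKf q s eps (snd AB) j)" for j
    unfolding Kop_def AKf_def BKf_def
  proof (rule srep_sum)
    fix j' assume "j' \<in> {1..q}"
    then show "srep \<psi> (\<lambda>dx y. Kmat s eps j j' * GG dx j' y) (Kmat s eps j j' * fst AB j') (Kmat s eps j j' *\<^sub>R snd AB j')"
      using srep.rscale[OF IH] by blast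
  qed simp
  have Sh: "srep \<psi> (\<lambda>dx y. M i kk * Mi kk j * shift dx (c kk) (Kop q s eps (GG dx) j) y)
      ((M i kk * Mi kk j) * AKf q s eps (fst AB) j) ((M i kk * Mi kk j) *\<^sub>R (BKf q s eps (snd AB) j + AKf q s eps (fst AB) j *\<^sub>R cv (c kk)))"
    for i j kk
    by (rule srep_cong[OF srep.rscale[OF srep_shift[OF Kj, of j "cv (c kk)"]]]) (auto simp: shift_def cv_def)
  show ?case
  proof
    fix i assume i: "i \<in> {1..q}"
    have "srep \<psi> (\<lambda>dx y. \<Sum>j\<in>{1..q}. \<Sum>kk\<in>{1..q}. M i kk * Mi kk j * shift dx (c kk) (Kop q s eps (GG dx) j) y)
       (\<Sum>j\<in>{1..q}. \<Sum>kk\<in>{1..q}. (M i kk * Mi kk j) * AKf q s eps (fst AB) j)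
       (\<Sum>j\<in>{1..q}. \<Sum>kk\<in>{1..q}. (M i kk * Mi kk j) *\<^sub>R (BKf q s eps (snd AB) j + AKf q s eps (fst AB) j *\<^sub>R cv (c kk)))"
      by (intro srep_sum finite_atLeastAtMost Sh)
    then show "srep \<psi> (\<lambda>dx y. ((Eop q c M Mi s eps dx ^^ Suc k) (\<lambda>i. laurent_app dx (w i) \<psi>)) i y)
            (fst (ABv q c M Mi s eps (omega0 w) (\<lambda>i. \<Sum>e\<in>{e. w i e \<noteq> 0}. w i e *\<^sub>R cv e) (Suc k)) i)
            (snd (ABv q c M Mi s eps (omega0 w) (\<lambda>i. \<Sum>e\<in>{e. w i e \<noteq> 0}. w i e *\<^sub>R cv e) (Suc k)) i)"
      by (rule srep_cong) (auto simp: GG_def AB_def Eop_def Top_def TA_def TB_def)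
  qed
qed

lemma TA_id:
  assumes M_inv1: "\<forall>i\<in>{1..q}. \<forall>j\<in>{1..q}. (\<Sum>k\<in>{1..q}. M i k * Mi k j) = (if i = j then 1 else 0)"
    and i: "i \<in> {1..q}"
  shows "TA q M Mi A i = A i"
proof -
  have "TA q M Mi A i = (\<Sum>j\<in>{1..q}. (\<Sum>k\<in>{1..q}. M i k * Mi k j) * A j)"
    unfolding TA_def by (simp add: sum_distrib_right)
  also have "\<dots> = (\<Sum>j\<in>{1..q}. (if i = j then A j else 0))"
    using M_inv1 i by (intro sum.cong) auto
  also have "\<dots> = A i" using i by simp
  finally show ?thesis .
qed

lemma TB_id:
  assumes M_inv1: "\<forall>i\<in>{1..q}. \<forall>j\<in>{1..q}. (\<Sum>k\<in>{1..q}. M i k * Mi k j) = (if i = j then 1 else 0)"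
    and i: "i \<in> {1..q}"
  shows "TB q c M Mi A B i = B i + (\<Sum>j\<in>{1..q}. \<Sum>k\<in>{1..q}. (M i k * Mi k j * A j) *\<^sub>R cv (c k))"
proof -
  have "TB q c M Mi A B i = (\<Sum>j\<in>{1..q}. (\<Sum>k\<in>{1..q}. M i k * Mi k j) *\<^sub>R B j)
        + (\<Sum>j\<in>{1..q}. \<Sum>k\<in>{1..q}. (M i k * Mi k j * A j) *\<^sub>R cv (c k))"
    unfolding TB_def by (simp add: scaleR_right_distrib sum.distrib scaleR_sum_left)
  also have "(\<Sum>j\<in>{1..q}. (\<Sum>k\<in>{1..q}. M i k * Mi k j) *\<^sub>R B j) = (\<Sum>j\<in>{1..q}. (if i = j then B j else 0))"
    using M_inv1 i by (intro sum.cong) auto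
  also have "\<dots> = B i" using i by simp
  finally show ?thesis .
qed

lemma Kmat_1: "eps 1 = 1 \<Longrightarrow> Kmat s eps 1 j = (if j = 1 then 1 else 0)"
  by (auto simp: Kmat_def)

lemma AKf_1: assumes "q \<ge> 1" "eps 1 = 1" shows "AKf q s eps A 1 = A 1"
proof -
  have "AKf q s eps A 1 = (\<Sum>j\<in>{1..q}. if j = 1 then A j else 0)"
    unfolding AKf_def using assms by (intro sum.cong) (auto simp: Kmat_def)
  then show ?thesis using assms by simp
qed

lemma BKf_1: assumes "q \<ge> 1" "eps 1 = 1" shows "BKf q s eps B 1 = B 1"
proof -
  have "BKf q s eps B 1 = (\<Sum>j\<in>{1..q}. if j = 1 then B j else 0)"
    unfolding BKf_def using assms by (intro sum.cong) (auto simp: Kmat_def)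
  then show ?thesis using assms by simp
qed

lemma AKf_r:
  assumes "r \<in> {2..q}"
  shows "AKf q s eps A r = (1 - s r) * A r + s r * eps r * A 1"
proof -
  have "AKf q s eps A r = (\<Sum>j\<in>{1..q}. (if j = r then (1 - s r) * A j else 0) + (if j = 1 then s r * eps r * A j else 0))"
    unfolding AKf_def using assms by (intro sum.cong) (auto simp: Kmat_def algebra_simps)
  also have "\<dots> = (1 - s r) * A r + s r * eps r * A 1"
    using assms by (simp add: sum.distrib)
  finally show ?thesis .
qed

lemma A_closed:
  assumes M_inv1: "\<forall>i\<in>{1..q}. \<forall>j\<in>{1..q}. (\<Sum>k\<in>{1..q}. M i k * Mi k j) = (if i = j then 1 else 0)"
    and q: "q \<ge> 1" and e1: "eps 1 = 1"
  shows "fst (ABv q c M Mi s eps Az Bz k) 1 = Az 1 \<and>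
     (\<forall>r\<in>{2..q}. fst (ABv q c M Mi s eps Az Bz k) r = Az r + (eps r * Az 1 - Az r) * pi_poly k (s r))"
proof (induction k)
  case 0
  then show ?case by (simp add: pi_poly_def)
next
  case (Suc k)
  let ?A = "fst (ABv q c M Mi s eps Az Bz k)"
  have one: "1 \<in> {1..q}" using q by simp
  have "fst (ABv q c M Mi s eps Az Bz (Suc k)) 1 = Az 1"
    using TA_id[OF M_inv1 one] AKf_1[of q eps, OF q e1] Suc.IH by simp
  moreover have "fst (ABv q c M Mi s eps Az Bz (Suc k)) r = Az r + (eps r * Az 1 - Az r) * pi_poly (Suc k) (s r)"
    if r: "r \<in> {2..q}" for r
  proof -
    have ri: "r \<in> {1..q}" using r by simp
    have "fst (ABv q c M Mi s eps Az Bz (Suc k)) r = (1 - s r) * ?A r + s r * eps r * ?A 1"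
      using TA_id[OF M_inv1 ri] AKf_r[OF r] by simp
    also have "\<dots> = (1 - s r) * (Az r + (eps r * Az 1 - Az r) * pi_poly k (s r)) + s r * eps r * Az 1"
      using Suc.IH r by simp
    also have "\<dots> = Az r + (eps r * Az 1 - Az r) * pi_poly (Suc k) (s r)"
      by (simp add: pi_poly_def algebra_simps)
    finally show ?thesis .
  qed
  ultimately show ?case by blast
qed

lemma D_cv:
  fixes \<psi> :: "real^'d \<Rightarrow> real"
  assumes "linear (frechet_derivative \<psi> (at x))"
  shows "frechet_derivative \<psi> (at x) (cv e) = (\<Sum>l\<in>UNIV. of_int (e $ l) * dpart \<psi> l x)"
  using linear_coords[OF assms, of "cv e"] by (simp add: cv_def dpart_def)

lemma B_step:
  fixes \<psi> :: "real^'d \<Rightarrow> real"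
  assumes M_inv1: "\<forall>i\<in>{1..q}. \<forall>j\<in>{1..q}. (\<Sum>k\<in>{1..q}. M i k * Mi k j) = (if i = j then 1 else 0)"
    and q: "q \<ge> 1" and e1: "eps 1 = 1"
    and lin: "linear (frechet_derivative \<psi> (at x))"
  shows "frechet_derivative \<psi> (at x) (snd (ABv q c M Mi s eps Az Bz (Suc k)) 1)
    = frechet_derivative \<psi> (at x) (snd (ABv q c M Mi s eps Az Bz k) 1)
      + (\<Sum>j\<in>{1..q}. fst (ABv q c M Mi s eps Az Bz (Suc k)) j * Gop q c M Mi 1 j \<psi> x)"
proof -
  let ?D = "frechet_derivative \<psi> (at x)"
  let ?A = "fst (ABv q c M Mi s eps Az Bz k)"
  let ?B = "snd (ABv q c M Mi s eps Az Bz k)"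
  have one: "1 \<in> {1..q}" using q by simp
  have "snd (ABv q c M Mi s eps Az Bz (Suc k)) 1 = ?B 1 +
     (\<Sum>j\<in>{1..q}. \<Sum>kk\<in>{1..q}. (M 1 kk * Mi kk j * AKf q s eps ?A j) *\<^sub>R cv (c kk))"
    unfolding ABv.simps snd_conv fst_conv
    using TB_id[OF M_inv1 one, of c "AKf q s eps ?A" "BKf q s eps ?B"] BKf_1[of q eps s ?B, OF q e1] by simp
  then have "?D (snd (ABv q c M Mi s eps Az Bz (Suc k)) 1) = ?D (?B 1) +
     (\<Sum>j\<in>{1..q}. \<Sum>kk\<in>{1..q}. (M 1 kk * Mi kk j * AKf q s eps ?A j) * ?D (cv (c kk)))"
    using lin by (simp add: linear_add linear_sum linear_scale)
  also have "(\<Sum>j\<in>{1..q}. \<Sum>kk\<in>{1..q}. (M 1 kk * Mi kk j * AKf q s eps ?A j) * ?D (cv (c kk)))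
     = (\<Sum>j\<in>{1..q}. fst (ABv q c M Mi s eps Az Bz (Suc k)) j * Gop q c M Mi 1 j \<psi> x)"
  proof (intro sum.cong refl)
    fix j assume j: "j \<in> {1..q}"
    have "fst (ABv q c M Mi s eps Az Bz (Suc k)) j = AKf q s eps ?A j"
      using TA_id[OF M_inv1 j] by simp
    show "(\<Sum>kk\<in>{1..q}. (M 1 kk * Mi kk j * AKf q s eps ?A j) * ?D (cv (c kk)))
       = fst (ABv q c M Mi s eps Az Bz (Suc k)) j * Gop q c M Mi 1 j \<psi> x"
    proof -
      have "(\<Sum>kk\<in>{1..q}. (M 1 kk * Mi kk j * AKf q s eps ?A j) * ?D (cv (c kk)))
         = AKf q s eps ?A j * (\<Sum>kk\<in>{1..q}. M 1 kk * Mi kk j * ?D (cv (c kk)))"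
        by (simp add: sum_distrib_left algebra_simps)
      then show ?thesis using \<open>fst (ABv q c M Mi s eps Az Bz (Suc k)) j = AKf q s eps ?A j\<close>
        by (simp add: Gop_def D_cv[OF lin])
    qed
  qed
  finally show ?thesis .
qed

lemma B_sum:
  fixes \<psi> :: "real^'d \<Rightarrow> real"
  assumes M_inv1: "\<forall>i\<in>{1..q}. \<forall>j\<in>{1..q}. (\<Sum>k\<in>{1..q}. M i k * Mi k j) = (if i = j then 1 else 0)"
    and q: "q \<ge> 1" and e1: "eps 1 = 1"
    and lin: "linear (frechet_derivative \<psi> (at x))"
  shows "frechet_derivative \<psi> (at x) (snd (ABv q c M Mi s eps Az Bz n) 1)
    = frechet_derivative \<psi> (at x) (Bz 1)
      + (\<Sum>m\<in>{1..n}. \<Sum>j\<in>{1..q}. fst (ABv q c M Mi s eps Az Bz m) j * Gop q c M Mi 1 j \<psi> x)"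
proof (induction n)
  case 0
  then show ?case by simp
next
  case (Suc n)
  then show ?case using B_step[where q=q and M=M and Mi=Mi and eps=eps and \<psi>=\<psi> and x=x and c=c and s=s and Az=Az and Bz=Bz and k=n, OF M_inv1 q e1 lin] by simp
qed

lemma pi_reindex: "n \<ge> 1 \<Longrightarrow> (\<Sum>l\<in>{0..n-1}. pi_poly (n - l) X) = (\<Sum>m\<in>{1..n}. pi_poly m X)"
  by (rule sum.reindex_bij_witness[of _ "\<lambda>m. n - m" "\<lambda>l. n - l"]) auto

theorem proposition2:
  fixes q :: nat and c :: "nat \<Rightarrow> int^'d"
    and M Mi :: "nat \<Rightarrow> nat \<Rightarrow> real"
    and s eps :: "nat \<Rightarrow> real" and lam :: real
    and w :: "nat \<Rightarrow> int^'d \<Rightarrow> real"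
    and n :: nat and x :: "real^'d"
    and phi :: "real \<times> (real^'d) \<Rightarrow> real"
  assumes q_pos: "q \<ge> 1"
    and M_inv1: "\<forall>i\<in>{1..q}. \<forall>j\<in>{1..q}. (\<Sum>k\<in>{1..q}. M i k * Mi k j) = (if i = j then 1 else 0)"
    and M_inv2: "\<forall>i\<in>{1..q}. \<forall>j\<in>{1..q}. (\<Sum>k\<in>{1..q}. Mi i k * M k j) = (if i = j then 1 else 0)"
    and s_range: "\<forall>i\<in>{2..q}. 0 < s i \<and> s i \<le> 2"
    and eps1: "eps 1 = 1"
    and lam_pos: "lam > 0"
    and w_fin: "\<forall>i\<in>{1..q}. finite {e. w i e \<noteq> 0}"
    and n_pos: "n \<ge> 1"
    and phi_smooth: "smooth_fun phi"
  shows
   "(\<lambda>dx. phi (real n * dx / lam, x)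
          - (phi (0, x) + real n * dx / lam * dtime phi (0, x)))
       \<in> O[at_right 0](\<lambda>dx. dx ^ 2)
    \<and>
    (\<lambda>dx. start_scheme q c M Mi s eps w n dx (\<lambda>y. phi (0, y)) x
       - (omega0 w 1 * phi (0, x)
          - real n * dx *
             (Gop q c M Mi 1 1 (\<lambda>y. phi (0, y)) x * omega0 w 1
              + (\<Sum>r\<in>{2..q}. Gop q c M Mi 1 r (\<lambda>y. phi (0, y)) x * omega0 w r)
              + 1 / real n * (\<Sum>r\<in>{2..q}. Gop q c M Mi 1 r (\<lambda>y. phi (0, y)) x
                    * (eps r * omega0 w 1 - omega0 w r)
                    * (\<Sum>l\<in>{0..n-1}. pi_poly (n - l) (s r)))
              - 1 / real n * omega1 w 1 (\<lambda>y. phi (0, y)) x)))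
       \<in> O[at_right 0](\<lambda>dx. dx ^ 2)"
proof -
  have C2phi: "C2 phi" using C2_of_smooth phi_smooth by blast
  define \<psi> where "\<psi> = (\<lambda>y. phi (0, y))"
  have C2psi: "C2 \<psi>" using C2_slice(1)[OF C2phi] unfolding \<psi>_def by simp
  have lin: "linear (frechet_derivative \<psi> (at x))" by (rule C2_linear[OF C2psi])
  have part1: "(\<lambda>dx. phi (real n * dx / lam, x)
          - (phi (0, x) + real n * dx / lam * dtime phi (0, x))) \<in> O[at_right 0](\<lambda>dx. dx ^ 2)"
  proof -
    have T: "(\<lambda>h. phi ((0,x) + h *\<^sub>R (real n / lam, 0)) - phi (0,x) - h * frechet_derivative phi (at (0,x)) (real n / lam, 0))
        \<in> O[at_right 0](\<lambda>h. h^2)"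
      by (rule taylor2) (use C2phi in \<open>auto simp: C2_def\<close>)
    have linp: "linear (frechet_derivative phi (at (0,x)))" by (rule C2_linear[OF C2phi])
    have Dv: "frechet_derivative phi (at (0,x)) (real n / lam, 0) = real n / lam * dtime phi (0,x)"
      using linear_scale[OF linp, of "real n / lam" "(1,0)"] by (simp add: dtime_def)
    have pt: "(0,x) + h *\<^sub>R (real n / lam, 0) = (real n * h / lam, x)" for h
      by simp
    have "(\<lambda>dx. phi (real n * dx / lam, x) - (phi (0, x) + real n * dx / lam * dtime phi (0, x)))
       = (\<lambda>h. phi ((0,x) + h *\<^sub>R (real n / lam, 0)) - phi (0,x) - h * frechet_derivative phi (at (0,x)) (real n / lam, 0))"
      by (rule ext) (simp only: pt Dv, simp add: algebra_simps)
    then show ?thesis using T by simp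
  qed
  define B0 where "B0 = (\<lambda>i. \<Sum>e\<in>{e. w i e \<noteq> 0}. w i e *\<^sub>R cv e)"
  define Am where "Am = (\<lambda>m. fst (ABv q c M Mi s eps (omega0 w) B0 m))"
  define Bn where "Bn = snd (ABv q c M Mi s eps (omega0 w) B0 n) 1"
  define D where "D = frechet_derivative \<psi> (at x)"
  define G where "G = (\<lambda>j. Gop q c M Mi 1 j \<psi> x)"
  define Om where "Om = omega0 w"
  define d where "d = (\<lambda>r. eps r * Om 1 - Om r)"
  have one: "1 \<in> {1..q}" using q_pos by simp
  have S: "srep \<psi> (\<lambda>dx y. ((Eop q c M Mi s eps dx ^^ n) (\<lambda>i. laurent_app dx (w i) \<psi>)) 1 y) (Am n 1) Bn"
    using scheme_srep[where \<psi>=\<psi> and c=c and M=M and Mi=Mi and s=s and eps=eps and k=n, OF w_fin] one unfolding Am_def Bn_def B0_def by blast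
  have E: "(\<lambda>dx. ((Eop q c M Mi s eps dx ^^ n) (\<lambda>i. laurent_app dx (w i) \<psi>)) 1 x - (Am n 1 * \<psi> x - dx * D Bn))
       \<in> O[at_right 0](\<lambda>dx. dx^2)"
    using srep_expand[OF S C2psi, of x] unfolding D_def .
  have Acl: "Am m 1 = Om 1 \<and> (\<forall>r\<in>{2..q}. Am m r = Om r + d r * pi_poly m (s r))" for m
    using A_closed[where q=q and M=M and Mi=Mi and eps=eps and c=c and s=s and Az="omega0 w" and Bz=B0 and k=m, OF M_inv1 q_pos eps1] unfolding Am_def Om_def d_def by simp
  have Dsum: "D Bn = D (B0 1) + (\<Sum>m\<in>{1..n}. \<Sum>j\<in>{1..q}. Am m j * G j)"
    using B_sum[where q=q and M=M and Mi=Mi and eps=eps and \<psi>=\<psi> and x=x and c=c and s=s and Az="omega0 w" and Bz=B0 and n=n, OF M_inv1 q_pos eps1 lin]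
    unfolding D_def Bn_def Am_def G_def .
  have DB0: "D (B0 1) = - omega1 w 1 \<psi> x"
  proof -
    have "D (B0 1) = (\<Sum>e\<in>{e. w 1 e \<noteq> 0}. w 1 e * (\<Sum>l\<in>UNIV. of_int (e $ l) * dpart \<psi> l x))"
      unfolding B0_def D_def using lin by (simp add: linear_sum linear_scale D_cv)
    also have "\<dots> = (\<Sum>l\<in>UNIV. (\<Sum>e\<in>{e. w 1 e \<noteq> 0}. w 1 e * of_int (e $ l)) * dpart \<psi> l x)"
      by (simp add: sum_distrib_left sum_distrib_right sum.swap[of _ UNIV] algebra_simps)
    finally show ?thesis by (simp add: omega1_def)
  qed
  have inner: "(\<Sum>j\<in>{1..q}. Am m j * G j) = Om 1 * G 1 + (\<Sum>r\<in>{2..q}. (Om r + d r * pi_poly m (s r)) * G r)" for m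
  proof -
    have "(\<Sum>j\<in>{1..q}. Am m j * G j) = Am m 1 * G 1 + (\<Sum>r\<in>{2..q}. Am m r * G r)"
      using sum.atLeast_Suc_atMost[of 1 q "\<lambda>j. Am m j * G j"] q_pos by (simp add: numeral_2_eq_2)
    then show ?thesis using Acl[of m] by simp
  qed
  have inner2: "(\<Sum>j\<in>{1..q}. Am m j * G j) = Om 1 * G 1 + (\<Sum>r\<in>{2..q}. Om r * G r + G r * d r * pi_poly m (s r))" for m
    unfolding inner by (intro arg_cong[where f="\<lambda>z. Om 1 * G 1 + z"] sum.cong refl) (simp add: algebra_simps)
  have msum: "(\<Sum>m\<in>{1..n}. \<Sum>j\<in>{1..q}. Am m j * G j)
     = real n * Om 1 * G 1 + (\<Sum>r\<in>{2..q}. real n * Om r * G r + G r * d r * (\<Sum>m\<in>{1..n}. pi_poly m (s r)))"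
  proof -
    have "(\<Sum>m\<in>{1..n}. \<Sum>j\<in>{1..q}. Am m j * G j)
       = (\<Sum>m\<in>{1..n}. Om 1 * G 1) + (\<Sum>m\<in>{1..n}. \<Sum>r\<in>{2..q}. Om r * G r + G r * d r * pi_poly m (s r))"
      by (simp only: inner2 sum.distrib)
    also have "\<dots> = real n * Om 1 * G 1 + (\<Sum>r\<in>{2..q}. \<Sum>m\<in>{1..n}. Om r * G r + G r * d r * pi_poly m (s r))"
      by (simp only: sum.swap[where A="{1..n}"]) simp
    also have "\<dots> = real n * Om 1 * G 1 + (\<Sum>r\<in>{2..q}. real n * Om r * G r + G r * d r * (\<Sum>m\<in>{1..n}. pi_poly m (s r)))"
      by (simp add: sum.distrib sum_distrib_left mult.assoc)
    finally show ?thesis .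
  qed
  have key: "D Bn = real n * (G 1 * Om 1 + (\<Sum>r\<in>{2..q}. G r * Om r)
       + 1 / real n * (\<Sum>r\<in>{2..q}. G r * d r * (\<Sum>l\<in>{0..n-1}. pi_poly (n - l) (s r)))
       - 1 / real n * omega1 w 1 \<psi> x)"
  proof -
    have nz: "real n \<noteq> 0" using n_pos by simp
    have "D Bn = - omega1 w 1 \<psi> x + real n * Om 1 * G 1 + (\<Sum>r\<in>{2..q}. real n * Om r * G r)
         + (\<Sum>r\<in>{2..q}. G r * d r * (\<Sum>m\<in>{1..n}. pi_poly m (s r)))"
      using Dsum DB0 msum by (simp add: sum.distrib)
    also have "\<dots> = real n * (G 1 * Om 1 + (\<Sum>r\<in>{2..q}. G r * Om r)
       + 1 / real n * (\<Sum>r\<in>{2..q}. G r * d r * (\<Sum>l\<in>{0..n-1}. pi_poly (n - l) (s r)))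
       - 1 / real n * omega1 w 1 \<psi> x)"
      unfolding pi_reindex[OF n_pos] using nz by (simp add: field_simps sum_distrib_left)
    finally show ?thesis .
  qed
  have A1: "Am n 1 = omega0 w 1" using Acl[of n] unfolding Om_def by blast
  have part2: "(\<lambda>dx. start_scheme q c M Mi s eps w n dx \<psi> x
       - (omega0 w 1 * \<psi> x
          - real n * dx *
             (G 1 * omega0 w 1
              + (\<Sum>r\<in>{2..q}. G r * omega0 w r)
              + 1 / real n * (\<Sum>r\<in>{2..q}. G r
                    * (eps r * omega0 w 1 - omega0 w r)
                    * (\<Sum>l\<in>{0..n-1}. pi_poly (n - l) (s r)))
              - 1 / real n * omega1 w 1 \<psi> x)))
       \<in> O[at_right 0](\<lambda>dx. dx ^ 2)"
  proof -
    have "(\<lambda>dx. start_scheme q c M Mi s eps w n dx \<psi> x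
       - (omega0 w 1 * \<psi> x
          - real n * dx *
             (G 1 * omega0 w 1
              + (\<Sum>r\<in>{2..q}. G r * omega0 w r)
              + 1 / real n * (\<Sum>r\<in>{2..q}. G r
                    * (eps r * omega0 w 1 - omega0 w r)
                    * (\<Sum>l\<in>{0..n-1}. pi_poly (n - l) (s r)))
              - 1 / real n * omega1 w 1 \<psi> x)))
      = (\<lambda>dx. ((Eop q c M Mi s eps dx ^^ n) (\<lambda>i. laurent_app dx (w i) \<psi>)) 1 x - (Am n 1 * \<psi> x - dx * D Bn))"
      using A1 by (intro ext) (simp add: start_scheme_def key Om_def d_def)
    then show ?thesis using E by simp
  qed
  show ?thesis using part1 part2 unfolding G_def \<psi>_def by simp
qed

end
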